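(* Let $T$ be a tree with $\sigma(T)=\tau_{\mathrm{ind}}(T)$, and let $I\subseteq V(T)$ be a minimum independent vertex cover of $T$. Suppose $T$ has a critical edge. Then there exists a pendant edge $e^{\ast}\in T$ whose leaf endpoint is contained in $I$ such that $\sigma(T\setminus e^{\ast})\le\sigma(T)-1$.
   Context: For a graph $F$, $|F|$ is its number of edges and $F-I$ the subgraph induced on $V(F)\setminus I$. The crosscut number is $\sigma(F)=\min\{|I|+|F-I| : I\text{ independent in }F\}$. For bipartite $F$, $\tau_{\mathrm{ind}}(F)$ is the minimum size of $S\subseteq V(F)$ with $|S\cap e|=1$ for every edge $e$; a minimum independent vertex cover is an independent set meeting every edge, of minimum size among such sets. For an edge $e$, $T\setminus e$ is $T$ with edge $e$ deleted (vertices kept); $e$ is critical if $\sigma(T\setminus e)\le\sigma(T)-1$. A pendant edge is an edge with an endpoint of degree $1$ (a leaf). *)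

theory Defs
  imports Main
begin

definition graph :: "'a set \<Rightarrow> 'a set set \<Rightarrow> bool" where
  "graph V E \<longleftrightarrow> finite V \<and> (\<forall>e\<in>E. \<exists>u v. e = {u, v} \<and> u \<noteq> v \<and> u \<in> V \<and> v \<in> V)"

definition connected_graph :: "'a set \<Rightarrow> 'a set set \<Rightarrow> bool" where
  "connected_graph V E \<longleftrightarrow> V \<noteq> {} \<and>
     (\<forall>u\<in>V. \<forall>v\<in>V. (u, v) \<in> {(x, y). {x, y} \<in> E}\<^sup>*)"

definition has_cycle :: "'a set \<Rightarrow> 'a set set \<Rightarrow> bool" where
  "has_cycle V E \<longleftrightarrow> (\<exists>xs. 3 \<le> length xs \<and> distinct xs \<and> set xs \<subseteq> V \<and>
     (\<forall>i < length xs. {xs ! i, xs ! ((i + 1) mod length xs)} \<in> E))"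

definition tree :: "'a set \<Rightarrow> 'a set set \<Rightarrow> bool" where
  "tree V E \<longleftrightarrow> graph V E \<and> connected_graph V E \<and> \<not> has_cycle V E"

definition degree :: "'a set set \<Rightarrow> 'a \<Rightarrow> nat" where
  "degree E v = card {e \<in> E. v \<in> e}"

definition independent :: "'a set \<Rightarrow> 'a set set \<Rightarrow> 'a set \<Rightarrow> bool" where
  "independent V E I \<longleftrightarrow> I \<subseteq> V \<and> (\<forall>e\<in>E. \<not> e \<subseteq> I)"

text \<open>Crosscut number: min over independent I of |I| + |F - I|, where F - I is the
  subgraph induced on V - I, whose edges are exactly the edges disjoint from I.\<close>
definition sigma :: "'a set \<Rightarrow> 'a set set \<Rightarrow> nat" where
  "sigma V E = Min {card I + card {e \<in> E. e \<inter> I = {}} | I. independent V E I}"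

definition tau_ind :: "'a set \<Rightarrow> 'a set set \<Rightarrow> nat" where
  "tau_ind V E = Min {card S | S. S \<subseteq> V \<and> (\<forall>e\<in>E. card (S \<inter> e) = 1)}"

definition min_indep_vertex_cover :: "'a set \<Rightarrow> 'a set set \<Rightarrow> 'a set \<Rightarrow> bool" where
  "min_indep_vertex_cover V E I \<longleftrightarrow>
     independent V E I \<and> (\<forall>e\<in>E. e \<inter> I \<noteq> {}) \<and>
     (\<forall>J. independent V E J \<and> (\<forall>e\<in>E. e \<inter> J \<noteq> {}) \<longrightarrow> card I \<le> card J)"

text \<open>Edge e is critical: sigma(T minus e) <= sigma(T) - 1 (stated without nat truncation).\<close>
definition critical_edge :: "'a set \<Rightarrow> 'a set set \<Rightarrow> 'a set \<Rightarrow> bool" where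
  "critical_edge V E e \<longleftrightarrow> e \<in> E \<and> sigma V (E - {e}) + 1 \<le> sigma V E"

end

theory Submission
  imports Defs
begin


definition gpath :: "'a set set \<Rightarrow> 'a list \<Rightarrow> bool" where
  "gpath F xs \<longleftrightarrow> distinct xs \<and> (\<forall>i. Suc i < length xs \<longrightarrow> {xs ! i, xs ! Suc i} \<in> F)"

lemma has_cycle_mono: "has_cycle V F \<Longrightarrow> F \<subseteq> E \<Longrightarrow> has_cycle V E"
  unfolding has_cycle_def by blast

lemma leaf_exists:
  assumes fin: "finite V"
    and edg: "\<forall>f\<in>F. \<exists>u v. f = {u, v} \<and> u \<noteq> v \<and> u \<in> V \<and> v \<in> V"
    and nc: "\<not> has_cycle V F" and ne: "F \<noteq> {}"
  shows "\<exists>v f. f \<in> F \<and> v \<in> f \<and> (\<forall>g\<in>F. v \<in> g \<longrightarrow> g = f)"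
proof -
  define P where "P n \<longleftrightarrow> (\<exists>xs. gpath F xs \<and> set xs \<subseteq> V \<and> length xs = n \<and> 2 \<le> n)" for n
  obtain f0 where "f0 \<in> F" using ne by blast
  then obtain a b where ab: "f0 = {a, b}" "a \<noteq> b" "a \<in> V" "b \<in> V" using edg by blast
  have "gpath F [a, b]" using ab \<open>f0 \<in> F\<close> by (auto simp: gpath_def less_Suc_eq)
  hence P2: "P 2" unfolding P_def using ab by (intro exI[of _ "[a,b]"]) auto
  have bnd: "\<forall>y. P y \<longrightarrow> y \<le> card V"
    unfolding P_def gpath_def using fin by (metis card_mono distinct_card)
  obtain n where n: "P n" "\<forall>y. P y \<longrightarrow> y \<le> n"
    using Nat.ex_has_greatest_nat[OF P2 bnd] by blast
  then obtain xs where xs: "gpath F xs" "set xs \<subseteq> V" "length xs = n" "2 \<le> n"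
    unfolding P_def by blast
  have dxs: "distinct xs" and adj: "\<And>i. Suc i < length xs \<Longrightarrow> {xs ! i, xs ! Suc i} \<in> F"
    using xs(1) unfolding gpath_def by auto
  define v where "v = xs ! 0"
  define f where "f = {xs ! 0, xs ! 1}"
  have fF: "f \<in> F" using adj[of 0] xs unfolding f_def by auto
  have "\<forall>g\<in>F. v \<in> g \<longrightarrow> g = f"
  proof (intro ballI impI)
    fix g assume gF: "g \<in> F" and vg: "v \<in> g"
    obtain z where gz: "g = {v, z}" "z \<noteq> v" "z \<in> V"
    proof -
      obtain p q where pq: "g = {p, q}" "p \<noteq> q" "p \<in> V" "q \<in> V" using edg gF by blast
      show ?thesis
      proof (cases "v = p")
        case True then show ?thesis using that pq by blast
      next
        case False then have "v = q" using vg pq by blast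
        then show ?thesis using that[of p] pq by (simp add: insert_commute)
      qed
    qed
    show "g = f"
    proof (cases "z \<in> set xs")
      case False
      have "gpath F (z # xs)"
        unfolding gpath_def
      proof (intro conjI allI impI)
        show "distinct (z # xs)" using False dxs by simp
        fix i assume "Suc i < length (z # xs)"
        then show "{(z # xs) ! i, (z # xs) ! Suc i} \<in> F"
          using adj gF gz unfolding v_def by (cases i) (auto simp: insert_commute)
      qed
      hence "P (Suc n)" unfolding P_def using xs gz by (intro exI[of _ "z # xs"]) auto
      then show ?thesis using n by fastforce
    next
      case True
      then obtain i where i: "i < length xs" "xs ! i = z" by (metis in_set_conv_nth)
      have "i \<noteq> 0" using i gz v_def by (metis)
      show ?thesis
      proof (cases "i = 1")
        case True then show ?thesis using gz i f_def v_def by auto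
      next
        case False
        with \<open>i \<noteq> 0\<close> have i2: "2 \<le> i" by simp
        define ys where "ys = take (Suc i) xs"
        have lys: "length ys = Suc i" using i unfolding ys_def by simp
        have "has_cycle V F"
          unfolding has_cycle_def
        proof (intro exI[of _ ys] conjI allI impI)
          show "3 \<le> length ys" using lys i2 by simp
          show "distinct ys" using dxs unfolding ys_def by simp
          show "set ys \<subseteq> V" using xs(2) unfolding ys_def by (meson order.trans set_take_subset)
          fix j assume j: "j < length ys"
          show "{ys ! j, ys ! ((j + 1) mod length ys)} \<in> F"
          proof (cases "j = i")
            case True
            then have "(j + 1) mod length ys = 0" using lys by simp
            then show ?thesis using True gz gF i unfolding ys_def v_def by (simp add: insert_commute)
          next
            case False
            then have "j < i" using j lys by simp
            then have "(j + 1) mod length ys = Suc j" using lys by simp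
            then show ?thesis using adj[of j] \<open>j < i\<close> i unfolding ys_def by simp
          qed
        qed
        then show ?thesis using nc by blast
      qed
    qed
  qed
  moreover have "v \<in> f" unfolding v_def f_def by simp
  ultimately show ?thesis using fF by blast
qed


lemma forest_card:
  assumes fin: "finite V"
    and edg: "\<forall>f\<in>F. \<exists>u v. f = {u, v} \<and> u \<noteq> v \<and> u \<in> V \<and> v \<in> V"
    and nc: "\<not> has_cycle V F" and ne: "F \<noteq> {}"
  shows "card F < card (\<Union>F)"
  using edg nc ne
proof (induction "card F" arbitrary: F rule: less_induct)
  case less
  have FV: "F \<subseteq> Pow V"
  proof
    fix f assume "f \<in> F"
    then obtain u v where "f = {u, v}" "u \<in> V" "v \<in> V" using bspec[OF less.prems(1)] by blast
    then show "f \<in> Pow V" by auto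
  qed
  hence finF: "finite F" using fin by (meson finite_Pow_iff rev_finite_subset)
  have UV: "\<Union>F \<subseteq> V" using FV by blast
  hence finU: "finite (\<Union>F)" using fin by (simp add: finite_subset)
  obtain v f where vf: "f \<in> F" "v \<in> f" "\<forall>g\<in>F. v \<in> g \<longrightarrow> g = f"
    using leaf_exists[OF fin less.prems] by blast
  obtain a b where ab: "f = {a, b}" "a \<noteq> b" using bspec[OF less.prems(1) vf(1)] by blast
  define F' where "F' = F - {f}"
  have cF: "card F = Suc (card F')" unfolding F'_def using finF vf(1)
    using card_Suc_Diff1 by metis
  show ?case
  proof (cases "F' = {}")
    case True
    then have "F = {f}" unfolding F'_def using vf(1) by blast
    then show ?thesis using ab by simp
  next
    case False
    have F'F: "F' \<subseteq> F" unfolding F'_def by blast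
    have nc': "\<not> has_cycle V F'" using less.prems(2) has_cycle_mono[OF _ F'F] by blast
    have e': "\<forall>f\<in>F'. \<exists>u v. f = {u, v} \<and> u \<noteq> v \<and> u \<in> V \<and> v \<in> V"
      using less.prems(1) F'F by (simp add: subset_iff)
    have IH: "card F' < card (\<Union>F')" using less.hyps[OF _ e' nc' False] cF by simp
    have "\<Union>F' \<subseteq> \<Union>F - {v}" using vf unfolding F'_def by blast
    hence "card (\<Union>F') \<le> card (\<Union>F - {v})" using finU by (simp add: card_mono)
    also have "\<dots> = card (\<Union>F) - 1" proof -
      have "v \<in> \<Union>F" using vf by blast
      then show ?thesis using finU by (simp add: card_Diff_singleton)
    qed
    finally show ?thesis using IH cF by arith
  qed
qed



lemma key_count:
  assumes g: "graph V E" and nc: "\<not> has_cycle V E"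
    and indI: "independent V E I"
    and deg2: "\<forall>s\<in>I. 2 \<le> degree E s"
    and eE: "e \<in> E" and JV: "J \<subseteq> V"
  shows "card I \<le> card J + card {f \<in> E - {e}. f \<inter> J = {}}"
proof -
  have fin: "finite V" and edg: "\<forall>f\<in>E. \<exists>u v. f = {u, v} \<and> u \<noteq> v \<and> u \<in> V \<and> v \<in> V"
    using g unfolding graph_def by auto
  have EP: "E \<subseteq> Pow V"
  proof
    fix f assume "f \<in> E"
    then obtain u v where "f = {u, v}" "u \<in> V" "v \<in> V" using edg by blast
    then show "f \<in> Pow V" by auto
  qed
  hence finE: "finite E" using fin by (meson finite_Pow_iff rev_finite_subset)
  have IV: "I \<subseteq> V" and indep: "\<forall>f\<in>E. \<not> f \<subseteq> I" using indI unfolding independent_def by auto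
  have finI: "finite I" using IV fin finite_subset by blast
  have finJ: "finite J" using JV fin finite_subset by blast
  define S where "S = I - J"
  define F where "F = {f \<in> E - {e}. f \<inter> S \<noteq> {}}"
  define N where "N = \<Union>F - S"
  define D where "D s = {f \<in> E. s \<in> f}" for s
  have finS: "finite S" using finI unfolding S_def by simp
  have finF: "finite F" using finE unfolding F_def by simp
  have "\<Union>F \<subseteq> V" using EP unfolding F_def by blast
  hence finU: "finite (\<Union>F)" using fin by (simp add: finite_subset)
  have finN: "finite N" using finU unfolding N_def by simp
  have "(\<Sum>s\<in>S. card (D s)) = card (\<Union>s\<in>S. D s)"
  proof (rule card_UN_disjoint[symmetric])
    show "finite S" by (rule finS)
    show "\<forall>i\<in>S. finite (D i)" using finE unfolding D_def by simp
    show "\<forall>i\<in>S. \<forall>j\<in>S. i \<noteq> j \<longrightarrow> D i \<inter> D j = {}"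
    proof (intro ballI impI)
      fix i j assume ij: "i \<in> S" "j \<in> S" "i \<noteq> j"
      show "D i \<inter> D j = {}"
      proof (rule ccontr)
        assume "D i \<inter> D j \<noteq> {}"
        then obtain f where f: "f \<in> E" "i \<in> f" "j \<in> f" unfolding D_def by blast
        then obtain u v where "f = {u, v}" using edg by blast
        then have "f = {i, j}" using f ij by auto
        then show False using indep f ij unfolding S_def by auto
      qed
    qed
  qed
  moreover have "(\<Sum>s\<in>S. card (D s)) \<ge> (\<Sum>s\<in>S. 2)"
    by (rule sum_mono) (use deg2 in \<open>auto simp: S_def D_def degree_def\<close>)
  moreover have "(\<Union>s\<in>S. D s) \<subseteq> insert e F" unfolding D_def F_def by blast
  hence "card (\<Union>s\<in>S. D s) \<le> card (insert e F)" using finF by (simp add: card_mono)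
  moreover have "card (insert e F) \<le> Suc (card F)" using finF by (simp add: card_insert_if)
  ultimately have cF: "2 * card S \<le> Suc (card F)" by simp
  have SN: "card S \<le> card N"
  proof (cases "F = {}")
    case True then show ?thesis using cF by simp
  next
    case False
    have e': "\<forall>f\<in>F. \<exists>u v. f = {u, v} \<and> u \<noteq> v \<and> u \<in> V \<and> v \<in> V"
    proof
      fix f assume "f \<in> F"
      then have "f \<in> E" unfolding F_def by simp
      then show "\<exists>u v. f = {u, v} \<and> u \<noteq> v \<and> u \<in> V \<and> v \<in> V" by (rule bspec[OF edg])
    qed
    have nc': "\<not> has_cycle V F" using nc has_cycle_mono[of V F E] unfolding F_def by blast
    have "card F < card (\<Union>F)" using forest_card[OF fin e' nc' False] .
    also have "\<Union>F \<subseteq> S \<union> N" unfolding N_def by blast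
    hence "card (\<Union>F) \<le> card (S \<union> N)" using finS finN by (simp add: card_mono)
    also have "\<dots> \<le> card S + card N" by (rule card_Un_le)
    finally show ?thesis using cF by linarith
  qed
  have Fstr: "\<And>f b. f \<in> F \<Longrightarrow> b \<in> N \<Longrightarrow> b \<in> f \<Longrightarrow> \<exists>s\<in>S. f = {s, b} \<and> b \<notin> I"
  proof -
    fix f b assume f: "f \<in> F" "b \<in> N" "b \<in> f"
    obtain s where s: "s \<in> S" "s \<in> f" using f(1) unfolding F_def by blast
    have "f \<in> E" using f(1) unfolding F_def by simp
    then obtain u v where uv: "f = {u, v}" "u \<noteq> v" using bspec[OF edg] by blast
    have "b \<notin> S" using f(2) unfolding N_def by blast
    hence fsb: "f = {s, b}" using uv s f(3) by auto
    have "b \<notin> I"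
    proof
      assume "b \<in> I"
      then have "f \<subseteq> I" using fsb s unfolding S_def by auto
      then show False using indep \<open>f \<in> E\<close> by blast
    qed
    then show "\<exists>s\<in>S. f = {s, b} \<and> b \<notin> I" using fsb s by blast
  qed
  have NI: "N \<inter> I = {}"
  proof -
    { fix b assume b: "b \<in> N" "b \<in> I"
      then obtain f where "f \<in> F" "b \<in> f" unfolding N_def by blast
      then have False using Fstr[of f b] b by blast }
    then show ?thesis by blast
  qed
  define T where "T = {f \<in> E - {e}. f \<inter> J = {}}"
  have finT: "finite T" using finE unfolding T_def by simp
  define h where "h b = (SOME f. f \<in> F \<and> b \<in> f)" for b
  have hprop: "h b \<in> F \<and> b \<in> h b" if "b \<in> N" for b
  proof -
    have "\<exists>f. f \<in> F \<and> b \<in> f" using that unfolding N_def by blast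
    then show ?thesis unfolding h_def by (rule someI_ex)
  qed
  have "card (N - J) \<le> card T"
  proof (rule card_inj_on_le[OF _ _ finT])
    show "inj_on h (N - J)"
    proof (rule inj_onI)
      fix b1 b2 assume b: "b1 \<in> N - J" "b2 \<in> N - J" "h b1 = h b2"
      obtain s1 where s1: "s1 \<in> S" "h b1 = {s1, b1}" "b1 \<notin> I" using Fstr[of "h b1" b1] hprop[of b1] b(1) by blast
      obtain s2 where s2: "s2 \<in> S" "h b2 = {s2, b2}" "b2 \<notin> I" using Fstr[of "h b2" b2] hprop[of b2] b(2) by blast
      have "s1 \<in> I" "s2 \<in> I" using s1 s2 unfolding S_def by auto
      then show "b1 = b2" using s1 s2 b(3) by (auto simp: doubleton_eq_iff)
    qed
    show "h ` (N - J) \<subseteq> T"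
    proof
      fix f assume "f \<in> h ` (N - J)"
      then obtain b where b: "b \<in> N - J" "f = h b" by blast
      obtain s where s: "s \<in> S" "f = {s, b}" using Fstr[of "h b" b] hprop[of b] b by blast
      have "f \<in> F" using hprop b by blast
      moreover have "f \<inter> J = {}" using s b unfolding S_def by auto
      ultimately show "f \<in> T" unfolding T_def F_def by blast
    qed
  qed
  moreover have "card J \<ge> card (J \<inter> I) + card (J \<inter> N)"
  proof -
    have "card (J \<inter> I) + card (J \<inter> N) = card ((J \<inter> I) \<union> (J \<inter> N))"
      using NI finJ by (subst card_Un_disjoint) auto
    also have "\<dots> \<le> card J" using finJ by (intro card_mono) auto
    finally show ?thesis .
  qed
  moreover have "card I = card (J \<inter> I) + card S"
    unfolding S_def using finI card_Int_Diff[of I J] by (simp add: Int_commute)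
  moreover have "card N = card (J \<inter> N) + card (N - J)"
    using finN card_Int_Diff[of N J] by (simp add: Int_commute)
  ultimately show ?thesis using SN unfolding T_def by linarith
qed



lemma sigma_le:
  assumes "finite V" "independent V E' J"
  shows "sigma V E' \<le> card J + card {e \<in> E'. e \<inter> J = {}}"
proof -
  let ?A = "{card J + card {e \<in> E'. e \<inter> J = {}} | J. independent V E' J}"
  have "?A \<subseteq> (\<lambda>J. card J + card {e \<in> E'. e \<inter> J = {}}) ` Pow V"
    unfolding independent_def by blast
  hence "finite ?A" using assms(1) by (meson finite_Pow_iff finite_imageI rev_finite_subset)
  moreover have "card J + card {e \<in> E'. e \<inter> J = {}} \<in> ?A" using assms(2) by blast
  ultimately show ?thesis unfolding sigma_def by (rule Min_le)
qed

lemma sigma_ge: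
  assumes "finite V" "\<forall>f\<in>E'. f \<noteq> {}"
    and "\<And>J. independent V E' J \<Longrightarrow> k \<le> card J + card {e \<in> E'. e \<inter> J = {}}"
  shows "k \<le> sigma V E'"
proof -
  let ?A = "{card J + card {e \<in> E'. e \<inter> J = {}} | J. independent V E' J}"
  have "?A \<subseteq> (\<lambda>J. card J + card {e \<in> E'. e \<inter> J = {}}) ` Pow V"
    unfolding independent_def by blast
  hence "finite ?A" using assms(1) by (meson finite_Pow_iff finite_imageI rev_finite_subset)
  moreover have "independent V E' {}" using assms(2) unfolding independent_def by blast
  hence "?A \<noteq> {}" by blast
  moreover have "\<forall>a\<in>?A. k \<le> a" using assms(3) by blast
  ultimately show ?thesis unfolding sigma_def by simp
qed

theorem proposition2p7:
  fixes V :: "'a set" and E :: "'a set set" and I :: "'a set"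
  assumes "tree V E"
    and "sigma V E = tau_ind V E"
    and "min_indep_vertex_cover V E I"
    and "\<exists>e. critical_edge V E e"
  shows "\<exists>e\<in>E. \<exists>u w. e = {u, w} \<and> u \<noteq> w \<and> degree E u = 1 \<and> u \<in> I \<and>
           sigma V (E - {e}) + 1 \<le> sigma V E"
proof -
  have g: "graph V E" and nc: "\<not> has_cycle V E" using assms(1) unfolding tree_def by auto
  have fin: "finite V" and edg: "\<forall>f\<in>E. \<exists>u v. f = {u, v} \<and> u \<noteq> v \<and> u \<in> V \<and> v \<in> V"
    using g unfolding graph_def by auto
  have EP: "E \<subseteq> Pow V"
  proof
    fix f assume "f \<in> E"
    then obtain u v where "f = {u, v}" "u \<in> V" "v \<in> V" using bspec[OF edg] by blast
    then show "f \<in> Pow V" by auto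
  qed
  hence finE: "finite E" using fin by (meson finite_Pow_iff rev_finite_subset)
  have nemp: "\<forall>f\<in>E. f \<noteq> {}"
  proof
    fix f assume "f \<in> E"
    then obtain u v where "f = {u, v}" using bspec[OF edg] by blast
    then show "f \<noteq> {}" by simp
  qed
  have indI: "independent V E I" and covI: "\<forall>e\<in>E. e \<inter> I \<noteq> {}"
    and minI: "\<And>J. independent V E J \<Longrightarrow> (\<forall>e\<in>E. e \<inter> J \<noteq> {}) \<Longrightarrow> card I \<le> card J"
    using assms(3) unfolding min_indep_vertex_cover_def by auto
  have IV: "I \<subseteq> V" and indep: "\<forall>f\<in>E. \<not> f \<subseteq> I" using indI unfolding independent_def by auto
  have finI: "finite I" using IV fin finite_subset by blast
  have tau: "tau_ind V E = card I"
  proof -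
    let ?A = "{card S | S. S \<subseteq> V \<and> (\<forall>e\<in>E. card (S \<inter> e) = 1)}"
    have "?A \<subseteq> card ` Pow V" by blast
    hence finA: "finite ?A" using fin by (meson finite_Pow_iff finite_imageI rev_finite_subset)
    have "\<forall>e\<in>E. card (I \<inter> e) = 1"
    proof
      fix e assume eE: "e \<in> E"
      then obtain u v where uv: "e = {u, v}" "u \<noteq> v" using bspec[OF edg] by blast
      have "e \<inter> I \<noteq> {}" using covI eE by blast
      moreover have "\<not> e \<subseteq> I" using indep eE by blast
      ultimately have "I \<inter> e = {u} \<or> I \<inter> e = {v}" using uv by auto
      then show "card (I \<inter> e) = 1" by auto
    qed
    hence "card I \<in> ?A" using IV by blast
    moreover have "\<And>y. y \<in> ?A \<Longrightarrow> card I \<le> y"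
    proof -
      fix y assume "y \<in> ?A"
      then obtain S where S: "y = card S" "S \<subseteq> V" "\<forall>e\<in>E. card (S \<inter> e) = 1" by blast
      have "independent V E S" unfolding independent_def
      proof (intro conjI ballI)
        show "S \<subseteq> V" by (rule S(2))
        fix e assume eE: "e \<in> E"
        then obtain u v where uv: "e = {u, v}" "u \<noteq> v" using bspec[OF edg] by blast
        show "\<not> e \<subseteq> S"
        proof
          assume "e \<subseteq> S"
          then have "S \<inter> e = e" by blast
          then show False using S(3) eE uv by auto
        qed
      qed
      moreover have "\<forall>e\<in>E. e \<inter> S \<noteq> {}"
      proof
        fix e assume "e \<in> E"
        then have "card (S \<inter> e) = 1" using S(3) by blast
        then show "e \<inter> S \<noteq> {}" by (metis Int_commute card.empty zero_neq_one)
      qed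
      ultimately show "card I \<le> y" using minI S(1) by blast
    qed
    ultimately show ?thesis unfolding tau_ind_def using finA by (intro Min_eqI) auto
  qed
  have sig: "sigma V E = card I" using assms(2) tau by simp
  have "\<exists>u\<in>I. degree E u = 1"
  proof (rule ccontr)
    assume nl: "\<not> (\<exists>u\<in>I. degree E u = 1)"
    have deg2: "\<forall>s\<in>I. 2 \<le> degree E s"
    proof
      fix s assume sI: "s \<in> I"
      have "degree E s \<noteq> 0"
      proof
        assume "degree E s = 0"
        then have none: "{e \<in> E. s \<in> e} = {}" using finE unfolding degree_def by simp
        have "independent V E (I - {s})" using indI unfolding independent_def by blast
        moreover have "\<forall>e\<in>E. e \<inter> (I - {s}) \<noteq> {}" using covI none by blast
        ultimately have "card I \<le> card (I - {s})" using minI by blast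
        moreover have "card I > 0" using sI finI card_gt_0_iff by blast
        ultimately show False using sI finI by simp
      qed
      then show "2 \<le> degree E s" using nl sI by fastforce
    qed
    obtain e0 where e0: "critical_edge V E e0" using assms(4) by blast
    have e0E: "e0 \<in> E" and crit: "sigma V (E - {e0}) + 1 \<le> sigma V E"
      using e0 unfolding critical_edge_def by auto
    have "card I \<le> sigma V (E - {e0})"
    proof (rule sigma_ge[OF fin])
      show "\<forall>f\<in>E - {e0}. f \<noteq> {}" using nemp by blast
      fix J assume "independent V (E - {e0}) J"
      then have "J \<subseteq> V" unfolding independent_def by blast
      then show "card I \<le> card J + card {e \<in> E - {e0}. e \<inter> J = {}}"
        using key_count[OF g nc indI deg2 e0E] by blast
    qed
    then show False using crit sig by simp
  qed
  then obtain u where uI: "u \<in> I" and du: "degree E u = 1" by blast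
  then obtain f where f1: "{e \<in> E. u \<in> e} = {f}" unfolding degree_def by (auto simp: card_1_singleton_iff)
  have fE: "f \<in> E" and uf: "u \<in> f" using f1 by auto
  obtain p q where pq: "f = {p, q}" "p \<noteq> q" using bspec[OF edg fE] by blast
  obtain w where fw: "f = {u, w}" "u \<noteq> w"
  proof (cases "u = p")
    case True then show ?thesis using that pq by blast
  next
    case False then have "u = q" using uf pq by blast
    then show ?thesis using that[of p] pq by (simp add: insert_commute)
  qed
  have indJ: "independent V (E - {f}) (I - {u})" using indI unfolding independent_def by blast
  have empt: "{e \<in> E - {f}. e \<inter> (I - {u}) = {}} = {}"
  proof (rule ccontr)
    assume "{e \<in> E - {f}. e \<inter> (I - {u}) = {}} \<noteq> {}"
    then obtain g where g: "g \<in> E" "g \<noteq> f" "g \<inter> (I - {u}) = {}" by blast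
    have "g \<inter> I \<noteq> {}" using covI g(1) by blast
    then have "u \<in> g" using g(3) by blast
    then have "g \<in> {e \<in> E. u \<in> e}" using g(1) by blast
    then show False using f1 g(2) by blast
  qed
  have "sigma V (E - {f}) \<le> card (I - {u})"
    using sigma_le[OF fin indJ] unfolding empt by simp
  also have "\<dots> = card I - 1" using uI finI by simp
  finally have s1: "sigma V (E - {f}) \<le> card I - 1" .
  have "card I > 0" using uI finI card_gt_0_iff by blast
  hence "sigma V (E - {f}) + 1 \<le> sigma V E" using s1 sig by linarith
  then show ?thesis using fE fw du uI by blast
qed

end
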